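(* Let $d\ge1$, $\beta>0$, $\theta:[0,\infty)\to[0,\infty)$ continuous with $\theta(x)>0$ for $x>0$ and $h_\pm<\infty$; $\mu>0$ for bosons, $\mu\in\mathbb{R}$ for fermions. Let $\vec K^L\sim\mathcal{P}^L_\pm$ independently over $L$. There exists a constant $c=c(\theta)$ such that almost surely $$\limsup_{L\to\infty}\max_{\vec u\in B_{\vec1}(L)}\frac{R^L_{\vec u}(\vec K^L)}{(\log L)^{1/d}}\le c.$$
   Context: Put $q_{\vec n}^L=e^{-\beta(\theta(\|\vec n\|/L)+\mu)}$. Bosons: under $\mathcal{P}^L_+$ the $K_{\vec n}$, $\vec n\in\mathbb{Z}^d$, are independent with $\mathbb{P}(K_{\vec n}=k)=(1-q^L_{\vec n})(q^L_{\vec n})^k$, $k\ge0$. Fermions: independent $\{0,1\}$-valued with $\mathbb{P}(K_{\vec n}=1)=q^L_{\vec n}/(1+q^L_{\vec n})$. $h_\pm=\int_{\mathbb{R}^d}\big(\mp\log(1\mp e^{-\beta(\theta(\|\vec y\|)+\mu)})+\beta(\theta(\|\vec y\|)+\mu)\frac{e^{-\beta(\theta(\|\vec y\|)+\mu)}}{1\mp e^{-\beta(\theta(\|\vec y\|)+\mu)}}\big)d\vec y$. $B_{\vec u}(s)=\{\vec n\in\mathbb{Z}^d:u_i\le n_i\le u_i+s-1\ \forall i\}$, $\vec k_{\vec u}(s)=(k_{\vec n})_{\vec n\in B_{\vec u}(s)}$, $R^L_{\vec u}(\vec k)=\inf\{s\ge1:\vec k_{\vec u}(s)\ne\vec k_{\vec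 v}(s)\ \forall\vec v\ne\vec u,\ \vec v\in B_{\vec1}(L)\}$. *)

theory Defs
  imports "HOL-Probability.Probability"
begin

text \<open>Lattice points of Z^d are functions 'd \<Rightarrow> int for a finite index type 'd (d = CARD('d)).\<close>

definition lnorm :: "('d::finite \<Rightarrow> int) \<Rightarrow> real" where
  "lnorm n = sqrt (\<Sum>i\<in>UNIV. (real_of_int (n i))^2)"

definition qL :: "real \<Rightarrow> (real \<Rightarrow> real) \<Rightarrow> real \<Rightarrow> nat \<Rightarrow> ('d::finite \<Rightarrow> int) \<Rightarrow> real" where
  "qL \<beta> \<theta> \<mu> L n = exp (- \<beta> * (\<theta> (lnorm n / real L) + \<mu>))"

text \<open>Integrand of h_+ (boson = True) resp. h_- (boson = False).\<close>
definition hint :: "bool \<Rightarrow> real \<Rightarrow> (real \<Rightarrow> real) \<Rightarrow> real \<Rightarrow> real^'d \<Rightarrow> real" where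
  "hint boson \<beta> \<theta> \<mu> y =
     (let a = \<beta> * (\<theta> (norm y) + \<mu>); e = exp (- a) in
      if boson then - ln (1 - e) + a * e / (1 - e)
      else ln (1 + e) + a * e / (1 + e))"

definition box :: "('d::finite \<Rightarrow> int) \<Rightarrow> nat \<Rightarrow> ('d \<Rightarrow> int) set" where
  "box u s = {n. \<forall>i. u i \<le> n i \<and> n i \<le> u i + int s - 1}"

definition same_pattern :: "(('d::finite \<Rightarrow> int) \<Rightarrow> nat) \<Rightarrow> ('d \<Rightarrow> int) \<Rightarrow> ('d \<Rightarrow> int) \<Rightarrow> nat \<Rightarrow> bool" where
  "same_pattern k u v s =
     (\<forall>j. (\<forall>i. 0 \<le> j i \<and> j i \<le> int s - 1) \<longrightarrow> k (\<lambda>i. u i + j i) = k (\<lambda>i. v i + j i))"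

definition Rdist :: "nat \<Rightarrow> ('d::finite \<Rightarrow> int) \<Rightarrow> (('d \<Rightarrow> int) \<Rightarrow> nat) \<Rightarrow> ereal" where
  "Rdist L u k =
     (let S = {s::nat. s \<ge> 1 \<and> (\<forall>v\<in>box (\<lambda>_. 1) L. v \<noteq> u \<longrightarrow> \<not> same_pattern k u v s)}
      in if S = {} then \<infinity> else ereal (real (LEAST s. s \<in> S)))"

end

theory Submission
  imports Defs "HOL-Real_Asymp.Real_Asymp"
begin


lemma indep_prod:
  fixes X :: "'i \<Rightarrow> 'a \<Rightarrow> nat"
  assumes ps: "prob_space M" and ind: "prob_space.indep_vars M (\<lambda>_. count_space UNIV) X I"
    and G: "finite G" "G \<subseteq> I"
  shows "measure M {\<omega>\<in>space M. \<forall>g\<in>G. X g \<omega> \<in> S g} = (\<Prod>g\<in>G. measure M {\<omega>\<in>space M. X g \<omega> \<in> S g})"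
proof (cases "G = {}")
  case True
  then show ?thesis using prob_space.prob_space[OF ps] by simp
next
  case False
  interpret prob_space M by fact
  have iv: "indep_sets (\<lambda>i. { X i -` A \<inter> space M | A. A \<in> sets (count_space UNIV)}) I"
    using ind unfolding indep_vars_def2 by auto
  have "prob (\<Inter>g\<in>G. X g -` S g \<inter> space M) = (\<Prod>g\<in>G. prob (X g -` S g \<inter> space M))"
    by (rule indep_setsD[OF iv G(2) False G(1)]) auto
  moreover have "(\<Inter>g\<in>G. X g -` S g \<inter> space M) = {\<omega>\<in>space M. \<forall>g\<in>G. X g \<omega> \<in> S g}"
    using False by auto
  moreover have "\<And>g. X g -` S g \<inter> space M = {\<omega>\<in>space M. X g \<omega> \<in> S g}" by auto
  ultimately show ?thesis by simp
qed

lemma meas_set: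
  fixes X :: "'i \<Rightarrow> 'a \<Rightarrow> nat"
  assumes ps: "prob_space M" and ind: "prob_space.indep_vars M (\<lambda>_. count_space UNIV) X I"
   and "g \<in> I"
  shows "{\<omega>\<in>space M. X g \<omega> \<in> T} \<in> sets M"
proof -
  interpret prob_space M by fact
  have "X g \<in> measurable M (count_space UNIV)" using ind assms(3) unfolding indep_vars_def2 by auto
  then have "X g -` T \<inter> space M \<in> sets M" by (rule measurable_sets) auto
  moreover have "X g -` T \<inter> space M = {\<omega>\<in>space M. X g \<omega> \<in> T}" by auto
  ultimately show ?thesis by simp
qed

lemma pred_X:
  fixes X :: "'i \<Rightarrow> 'a \<Rightarrow> nat"
  assumes ps: "prob_space M" and ind: "prob_space.indep_vars M (\<lambda>_. count_space UNIV) X I"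
   and "g \<in> I"
  shows "Measurable.pred M (\<lambda>\<omega>. X g \<omega> \<in> T)"
  unfolding pred_def using meas_set[OF assms] .

lemma pred_ev:
  fixes X :: "'i \<Rightarrow> 'a \<Rightarrow> nat"
  assumes ps: "prob_space M" and ind: "prob_space.indep_vars M (\<lambda>_. count_space UNIV) X I"
   and "finite G" "G \<subseteq> I" "finite J" "x`J \<subseteq> I" "y`J \<subseteq> I"
  shows "{\<omega>\<in>space M. (\<forall>g\<in>G. X g \<omega> \<in> S g) \<and> (\<forall>j\<in>J. (X (x j) \<omega> = 0) = (X (y j) \<omega> = 0))} \<in> sets M"
proof -
  have e: "\<And>A B. (A = B) = ((A \<longrightarrow> B) \<and> (B \<longrightarrow> A))" by blast
  have p: "\<And>g T. g \<in> I \<Longrightarrow> Measurable.pred M (\<lambda>\<omega>. X g \<omega> \<in> T)" using pred_X[OF ps ind] by blast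
  have p0: "\<And>g. g \<in> I \<Longrightarrow> Measurable.pred M (\<lambda>\<omega>. X g \<omega> = 0)" using p[of _ "{0}"] by simp
  have "Measurable.pred M (\<lambda>\<omega>. (\<forall>g\<in>G. X g \<omega> \<in> S g) \<and> (\<forall>j\<in>J. (X (x j) \<omega> = 0) = (X (y j) \<omega> = 0)))"
    unfolding e
    apply (intro pred_intros_logic pred_intros_finite assms p p0)
    using assms by auto
  then show ?thesis unfolding pred_def .
qed

lemma pair_prod:
  fixes X :: "'i \<Rightarrow> 'a \<Rightarrow> nat"
  assumes ps: "prob_space M" and ind: "prob_space.indep_vars M (\<lambda>_. count_space UNIV) X I"
  shows "finite J \<Longrightarrow> finite G \<Longrightarrow> G \<subseteq> I \<Longrightarrow> x`J \<subseteq> I \<Longrightarrow> y`J \<subseteq> I \<Longrightarrow> inj_on x J \<Longrightarrow> inj_on y J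
    \<Longrightarrow> x`J \<inter> y`J = {} \<Longrightarrow> G \<inter> (x`J \<union> y`J) = {} \<Longrightarrow>
    measure M {\<omega>\<in>space M. (\<forall>g\<in>G. X g \<omega> \<in> S g) \<and> (\<forall>j\<in>J. (X (x j) \<omega> = 0) = (X (y j) \<omega> = 0))}
    = (\<Prod>g\<in>G. measure M {\<omega>\<in>space M. X g \<omega> \<in> S g}) *
      (\<Prod>j\<in>J. measure M {\<omega>\<in>space M. X (x j) \<omega> = 0} * measure M {\<omega>\<in>space M. X (y j) \<omega> = 0}
          + (1 - measure M {\<omega>\<in>space M. X (x j) \<omega> = 0}) * (1 - measure M {\<omega>\<in>space M. X (y j) \<omega> = 0}))"
proof (induction J arbitrary: G S rule: finite_induct)
  case empty
  then show ?case using indep_prod[OF ps ind, of G S] by simp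
next
  case (insert j0 J)
  interpret prob_space M by fact
  define a where "a = x j0"
  define b where "b = y j0"
  define p where "p n = measure M {\<omega>\<in>space M. X n \<omega> = 0}" for n
  have abI: "a \<in> I" "b \<in> I" using insert by (auto simp: a_def b_def)
  have ab: "a \<noteq> b" "a \<notin> G" "b \<notin> G" "a \<notin> x`J" "a \<notin> y`J" "b \<notin> x`J" "b \<notin> y`J"
    using insert.prems insert.hyps unfolding a_def b_def by (auto simp: inj_on_def)
  define G' where "G' = insert a (insert b G)"
  define S1 where "S1 = S(a := {0}, b := {0})"
  define S2 where "S2 = S(a := -{0}, b := -{0})"
  have prem: "finite G'" "G' \<subseteq> I" "x`J \<subseteq> I" "y`J \<subseteq> I" "inj_on x J" "inj_on y J" "x`J \<inter> y`J = {}"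
     "G' \<inter> (x`J \<union> y`J) = {}"
    using insert.prems insert.hyps abI ab unfolding G'_def by auto
  note IH1 = insert.IH[OF prem(1-8), of S1]
  note IH2 = insert.IH[OF prem(1-8), of S2]
  define Q where "Q \<omega> = (\<forall>j\<in>J. (X (x j) \<omega> = 0) = (X (y j) \<omega> = 0))" for \<omega>
  define E1 where "E1 = {\<omega>\<in>space M. (\<forall>g\<in>G'. X g \<omega> \<in> S1 g) \<and> Q \<omega>}"
  define E2 where "E2 = {\<omega>\<in>space M. (\<forall>g\<in>G'. X g \<omega> \<in> S2 g) \<and> Q \<omega>}"
  have E1s: "E1 \<in> sets M" unfolding E1_def Q_def by (rule pred_ev[OF ps ind]) (use prem insert.hyps in auto)
  have E2s: "E2 \<in> sets M" unfolding E2_def Q_def by (rule pred_ev[OF ps ind]) (use prem insert.hyps in auto)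
  have SS1: "\<forall>g\<in>G. S1 g = S g" "S1 a = {0}" "S1 b = {0}" using ab unfolding S1_def by auto
  have SS2: "\<forall>g\<in>G. S2 g = S g" "S2 a = -{0}" "S2 b = -{0}" using ab unfolding S2_def by auto
  have eq: "{\<omega>\<in>space M. (\<forall>g\<in>G. X g \<omega> \<in> S g) \<and> (\<forall>j\<in>insert j0 J. (X (x j) \<omega> = 0) = (X (y j) \<omega> = 0))}
     = E1 \<union> E2"
    unfolding E1_def E2_def G'_def Q_def using SS1 SS2 by (auto simp: a_def[symmetric] b_def[symmetric])
  have disj: "E1 \<inter> E2 = {}" unfolding E1_def E2_def G'_def using SS1 SS2 by auto
  have m: "measure M (E1 \<union> E2) = measure M E1 + measure M E2"
    using finite_measure_Union[OF E1s E2s disj] .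
  have pr1: "(\<Prod>g\<in>G'. measure M {\<omega>\<in>space M. X g \<omega> \<in> S1 g}) = p a * p b * (\<Prod>g\<in>G. measure M {\<omega>\<in>space M. X g \<omega> \<in> S g})"
    unfolding G'_def using ab SS1 insert.prems by (simp add: p_def)
  have cmp: "\<And>n. n \<in> I \<Longrightarrow> measure M {\<omega>\<in>space M. X n \<omega> \<in> -{0}} = 1 - p n"
  proof -
    fix n assume n: "n \<in> I"
    have "{\<omega>\<in>space M. X n \<omega> \<in> -{0}} = space M - {\<omega>\<in>space M. X n \<omega> = 0}" by auto
    then show "measure M {\<omega>\<in>space M. X n \<omega> \<in> -{0}} = 1 - p n"
      using prob_compl[OF meas_set[OF ps ind n, of "{0}"]] by (simp add: p_def)
  qed
  have pr2: "(\<Prod>g\<in>G'. measure M {\<omega>\<in>space M. X g \<omega> \<in> S2 g}) = (1 - p a) * (1 - p b) * (\<Prod>g\<in>G. measure M {\<omega>\<in>space M. X g \<omega> \<in> S g})"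
    unfolding G'_def using ab SS2 insert.prems cmp abI by simp
  show ?case
    unfolding eq m
    using IH1 IH2 pr1 pr2 insert.hyps unfolding E1_def E2_def Q_def
    by (simp add: p_def a_def b_def algebra_simps)
qed

lemma pair_bound:
  fixes X :: "'i \<Rightarrow> 'a \<Rightarrow> nat"
  assumes ps: "prob_space M" and ind: "prob_space.indep_vars M (\<lambda>_. count_space UNIV) X I"
    and J: "finite J" "x`J \<subseteq> I" "y`J \<subseteq> I" "inj_on x J" "inj_on y J" "x`J \<inter> y`J = {}"
    and bd: "\<forall>j\<in>J. \<delta> \<le> measure M {\<omega>\<in>space M. X (x j) \<omega> = 0} \<and> measure M {\<omega>\<in>space M. X (x j) \<omega> = 0} \<le> 1 - \<delta>
        \<and> \<delta> \<le> measure M {\<omega>\<in>space M. X (y j) \<omega> = 0} \<and> measure M {\<omega>\<in>space M. X (y j) \<omega> = 0} \<le> 1 - \<delta>"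
  shows "measure M {\<omega>\<in>space M. \<forall>j\<in>J. (X (x j) \<omega> = 0) = (X (y j) \<omega> = 0)} \<le> (1 - \<delta>) ^ card J"
proof -
  interpret prob_space M by fact
  have "measure M {\<omega>\<in>space M. (\<forall>g\<in>{}. X g \<omega> \<in> S g) \<and> (\<forall>j\<in>J. (X (x j) \<omega> = 0) = (X (y j) \<omega> = 0))}
    = (\<Prod>g\<in>{}. measure M {\<omega>\<in>space M. X g \<omega> \<in> S g}) *
      (\<Prod>j\<in>J. measure M {\<omega>\<in>space M. X (x j) \<omega> = 0} * measure M {\<omega>\<in>space M. X (y j) \<omega> = 0}
          + (1 - measure M {\<omega>\<in>space M. X (x j) \<omega> = 0}) * (1 - measure M {\<omega>\<in>space M. X (y j) \<omega> = 0}))"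
    by (rule pair_prod[OF ps ind]) (use J in auto)
  then have eq: "measure M {\<omega>\<in>space M. \<forall>j\<in>J. (X (x j) \<omega> = 0) = (X (y j) \<omega> = 0)} =
      (\<Prod>j\<in>J. measure M {\<omega>\<in>space M. X (x j) \<omega> = 0} * measure M {\<omega>\<in>space M. X (y j) \<omega> = 0}
          + (1 - measure M {\<omega>\<in>space M. X (x j) \<omega> = 0}) * (1 - measure M {\<omega>\<in>space M. X (y j) \<omega> = 0}))"
    by simp
  have "(\<Prod>j\<in>J. measure M {\<omega>\<in>space M. X (x j) \<omega> = 0} * measure M {\<omega>\<in>space M. X (y j) \<omega> = 0}
          + (1 - measure M {\<omega>\<in>space M. X (x j) \<omega> = 0}) * (1 - measure M {\<omega>\<in>space M. X (y j) \<omega> = 0}))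
        \<le> (\<Prod>j\<in>J. 1 - \<delta>)"
  proof (rule prod_mono, rule conjI)
    fix j assume j: "j \<in> J"
    define a where "a = measure M {\<omega>\<in>space M. X (x j) \<omega> = 0}"
    define b where "b = measure M {\<omega>\<in>space M. X (y j) \<omega> = 0}"
    have ab: "0 \<le> a" "a \<le> 1" "0 \<le> b" "b \<le> 1" unfolding a_def b_def by auto
    have bd': "\<delta> \<le> a" "a \<le> 1 - \<delta>" "\<delta> \<le> b" "b \<le> 1 - \<delta>" using bd j unfolding a_def b_def by auto
    show "0 \<le> a * b + (1 - a) * (1 - b)" using ab by simp
    show "a * b + (1 - a) * (1 - b) \<le> 1 - \<delta>"
    proof -
      have "a * b \<le> (1 - \<delta>) * b" using bd' ab by (intro mult_right_mono) auto
      moreover have "(1 - a) * (1 - b) \<le> (1 - \<delta>) * (1 - b)" using bd' ab by (intro mult_right_mono) auto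
      ultimately show ?thesis by (simp add: algebra_simps)
    qed
  qed
  then show ?thesis unfolding eq by simp
qed



lemma card_half:
  fixes t :: int and s :: nat
  assumes t: "t > 0"
  shows "real s \<le> 2 * real (card {a\<in>{0..int s - 1}. a mod (2*t) < t})"
proof -
  define A where "A = {a\<in>{0..int s - 1}. a mod (2*t) < t}"
  define B where "B = {a\<in>{0..int s - 1}. \<not> a mod (2*t) < t}"
  have fin: "finite A" "finite B" unfolding A_def B_def
    by (rule finite_subset[where B="{0..int s - 1}"], auto)+
  have un: "A \<union> B = {0..int s - 1}" "A \<inter> B = {}" unfolding A_def B_def by auto
  have cs: "card A + card B = s"
    using card_Un_disjoint[OF fin un(2)] un(1) by simp
  have "inj_on (\<lambda>a. a - t) B" by (auto simp: inj_on_def)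
  moreover have "(\<lambda>a. a - t) ` B \<subseteq> A"
  proof
    fix z assume "z \<in> (\<lambda>a. a - t) ` B"
    then obtain a where a: "a \<in> B" "z = a - t" by auto
    have a0: "0 \<le> a" "a \<le> int s - 1" "t \<le> a mod (2*t)" using a(1) unfolding B_def by auto
    have "a mod (2*t) \<le> a" using a0 t by (simp add: zmod_le_nonneg_dividend)
    then have "t \<le> a" using a0 by linarith
    moreover have "(a - t) mod (2*t) = a mod (2*t) - t"
    proof -
      have "a mod (2*t) < 2*t" using t by simp
      have "(a - t) mod (2*t) = (a mod (2*t) - t) mod (2*t)" by (rule mod_diff_left_eq[symmetric])
      also have "\<dots> = a mod (2*t) - t" using a0 \<open>a mod (2*t) < 2*t\<close> by (intro mod_pos_pos_trivial) auto
      finally show ?thesis .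
    qed
    ultimately show "z \<in> A" using a a0 t unfolding A_def by auto
  qed
  ultimately have "card B \<le> card A" using card_inj_on_le fin(2) fin(1) by blast
  then show ?thesis using cs unfolding A_def[symmetric] by linarith
qed

definition Jset :: "('d::finite \<Rightarrow> int) \<Rightarrow> ('d \<Rightarrow> int) \<Rightarrow> nat \<Rightarrow> ('d \<Rightarrow> int) set" where
  "Jset u v s = (let i0 = (SOME i. u i \<noteq> v i); t = \<bar>v i0 - u i0\<bar> in
     {j. \<forall>i. 0 \<le> j i \<and> j i \<le> int s - 1 \<and> (i = i0 \<longrightarrow> j i mod (2*t) < t)})"

lemma Jset_props:
  fixes u v :: "'d::finite \<Rightarrow> int"
  assumes "u \<noteq> v"
  shows "finite (Jset u v s)"
    "\<And>j. j \<in> Jset u v s \<Longrightarrow> \<forall>i. 0 \<le> j i \<and> j i \<le> int s - 1"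
    "\<And>j j'. j \<in> Jset u v s \<Longrightarrow> j' \<in> Jset u v s \<Longrightarrow> (\<lambda>i. u i + j i) \<noteq> (\<lambda>i. v i + j' i)"
    "real s ^ CARD('d) \<le> 2 * real (card (Jset u v s))"
proof -
  define i0 where "i0 = (SOME i. u i \<noteq> v i)"
  have i0: "u i0 \<noteq> v i0" unfolding i0_def 
  proof -
    have "\<exists>i. u i \<noteq> v i" using assms by auto
    then show "u (SOME i. u i \<noteq> v i) \<noteq> v (SOME i. u i \<noteq> v i)" by (rule someI_ex)
  qed
  define t where "t = \<bar>v i0 - u i0\<bar>"
  have t: "t > 0" using i0 unfolding t_def by auto
  define S where "S i = (if i = i0 then {a\<in>{0..int s - 1}. a mod (2*t) < t} else {0..int s - 1})" for i
  have JE: "Jset u v s = PiE UNIV S"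
    unfolding Jset_def Let_def i0_def[symmetric] t_def[symmetric] S_def PiE_UNIV_domain Pi_def
    by (auto split: if_splits)
  show "finite (Jset u v s)" unfolding JE
  proof (intro finite_PiE)
    fix i show "finite (S i)" unfolding S_def
      by (cases "i = i0") (simp, rule finite_subset[where B="{0..int s - 1}"], auto)
  qed simp
  show "\<And>j. j \<in> Jset u v s \<Longrightarrow> \<forall>i. 0 \<le> j i \<and> j i \<le> int s - 1"
    unfolding Jset_def Let_def by auto
  show "\<And>j j'. j \<in> Jset u v s \<Longrightarrow> j' \<in> Jset u v s \<Longrightarrow> (\<lambda>i. u i + j i) \<noteq> (\<lambda>i. v i + j' i)"
  proof
    fix j j' assume j: "j \<in> Jset u v s" "j' \<in> Jset u v s" and e: "(\<lambda>i. u i + j i) = (\<lambda>i. v i + j' i)"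
    have m: "j i0 mod (2*t) < t" "j' i0 mod (2*t) < t" "0 \<le> j i0" "0 \<le> j' i0"
      using j unfolding Jset_def Let_def i0_def[symmetric] t_def[symmetric] by auto
    have eq: "u i0 + j i0 = v i0 + j' i0" using fun_cong[OF e, of i0] by simp
    have key: "\<And>a. a mod (2*t) < t \<Longrightarrow> \<not> (a + t) mod (2*t) < t"
    proof -
      fix a :: int assume "a mod (2*t) < t"
      moreover have "0 \<le> a mod (2*t)" using t by simp
      ultimately have "(a + t) mod (2*t) = a mod (2*t) + t"
      proof -
        have "(a + t) mod (2*t) = (a mod (2*t) + t) mod (2*t)" by (rule mod_add_left_eq[symmetric])
        also have "\<dots> = a mod (2*t) + t" using \<open>a mod (2*t) < t\<close> \<open>0 \<le> a mod (2*t)\<close>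
          by (intro mod_pos_pos_trivial) auto
        finally show ?thesis .
      qed
      then show "\<not> (a + t) mod (2*t) < t" using \<open>0 \<le> a mod (2*t)\<close> by simp
    qed
    show False
    proof (cases "v i0 - u i0 > 0")
      case True
      then have "j i0 = j' i0 + t" using eq unfolding t_def by simp
      then show False using key[OF m(2)] m(1) by simp
    next
      case False
      then have "j' i0 = j i0 + t" using eq i0 unfolding t_def by simp
      then show False using key[OF m(1)] m(2) by simp
    qed
  qed
  have cJ: "card (Jset u v s) = card (S i0) * s ^ (CARD('d) - 1)"
  proof -
    have "card (Jset u v s) = (\<Prod>i\<in>UNIV. card (S i))" unfolding JE by (rule card_PiE) simp
    also have "\<dots> = card (S i0) * (\<Prod>i\<in>UNIV - {i0}. card (S i))"
      by (rule prod.remove) auto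
    also have "(\<Prod>i\<in>UNIV - {i0}. card (S i)) = (\<Prod>i\<in>UNIV - {i0}. s)"
      by (rule prod.cong) (auto simp: S_def)
    also have "\<dots> = s ^ (CARD('d) - 1)" by (simp add: card_Diff_singleton)
    finally show ?thesis .
  qed
  have h: "real s \<le> 2 * real (card (S i0))" using card_half[OF t, of s] by (simp add: S_def)
  have "real s ^ CARD('d) = real s * real s ^ (CARD('d) - 1)"
  proof -
    obtain n where n: "CARD('d) = Suc n" using not0_implies_Suc[of "CARD('d)"] by auto
    show ?thesis unfolding n by simp
  qed
  also have "\<dots> \<le> 2 * real (card (S i0)) * real s ^ (CARD('d) - 1)"
    using h by (intro mult_right_mono) auto
  also have "\<dots> = 2 * real (card (Jset u v s))" unfolding cJ by simp
  finally show "real s ^ CARD('d) \<le> 2 * real (card (Jset u v s))" .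
qed



lemma factor_bound:
  fixes a b \<delta> :: real
  assumes "\<delta> \<le> a" "a \<le> 1 - \<delta>" "\<delta> \<le> b" "b \<le> 1 - \<delta>" "0 \<le> b" "b \<le> 1"
  shows "a * b + (1 - a) * (1 - b) \<le> 1 - \<delta>"
proof -
  have "a * b \<le> (1 - \<delta>) * b" using assms by (intro mult_right_mono) auto
  moreover have "(1 - a) * (1 - b) \<le> (1 - \<delta>) * (1 - b)" using assms by (intro mult_right_mono) auto
  ultimately show ?thesis by (simp add: algebra_simps)
qed

lemma lnorm_bound:
  fixes n :: "'d::finite \<Rightarrow> int"
  assumes "\<forall>i. \<bar>real_of_int (n i)\<bar> \<le> B"
  shows "lnorm n \<le> sqrt (real CARD('d)) * B"
proof -
  have B: "0 \<le> B" using assms by (meson abs_ge_zero order_trans)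
  have "(\<Sum>i\<in>UNIV. (real_of_int (n i))^2) \<le> (\<Sum>i\<in>(UNIV::'d set). B^2)"
  proof (rule sum_mono)
    fix i
    have "\<bar>real_of_int (n i)\<bar>^2 \<le> B^2" using assms by (intro power_mono) auto
    then show "(real_of_int (n i))^2 \<le> B^2" by simp
  qed
  also have "\<dots> = real CARD('d) * B^2" by simp
  finally have "lnorm n \<le> sqrt (real CARD('d) * B^2)" unfolding lnorm_def by simp
  also have "\<dots> = sqrt (real CARD('d)) * B" using B by (simp add: real_sqrt_mult)
  finally show ?thesis .
qed

lemma lnorm_nonneg: "0 \<le> lnorm n" unfolding lnorm_def by (simp add: sum_nonneg)

lemma Rdist_le:
  assumes "s \<ge> 1" "\<forall>v\<in>box (\<lambda>_. 1) L. v \<noteq> u \<longrightarrow> \<not> same_pattern k u v s"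
  shows "\<exists>m. Rdist L u k = ereal (real m) \<and> m \<le> s"
proof -
  define S where "S = {s::nat. s \<ge> 1 \<and> (\<forall>v\<in>box (\<lambda>_. 1) L. v \<noteq> u \<longrightarrow> \<not> same_pattern k u v s)}"
  have "s \<in> S" using assms unfolding S_def by auto
  then have "S \<noteq> {}" "(LEAST s. s \<in> S) \<le> s" by (auto intro: Least_le)
  then show ?thesis unfolding Rdist_def Let_def S_def[symmetric] by auto
qed

lemma box_eq: "box (\<lambda>_. 1) L = PiE (UNIV::'d::finite set) (\<lambda>_. {1..int L})"
  unfolding box_def PiE_UNIV_domain Pi_def by auto

lemma card_box: "card (box (\<lambda>_. 1) L :: ('d::finite \<Rightarrow> int) set) = L ^ CARD('d)"
  unfolding box_eq by (simp add: card_PiE)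

lemma finite_box: "finite (box (\<lambda>_. 1) L :: ('d::finite \<Rightarrow> int) set)"
  unfolding box_eq by (intro finite_PiE) auto

lemma box_ne: "L \<ge> 1 \<Longrightarrow> box (\<lambda>_. 1) L \<noteq> {}"
proof -
  assume "L \<ge> 1"
  then have "(\<lambda>_. 1) \<in> box (\<lambda>_. 1) L" unfolding box_def by auto
  then show ?thesis by blast
qed

lemma ev_lin: "eventually (\<lambda>x::real. C * ln x + 1 \<le> x) at_top"
  by real_asymp



theorem lemma3:
  fixes M :: "'a measure"
    and K :: "nat \<Rightarrow> ('d::finite \<Rightarrow> int) \<Rightarrow> 'a \<Rightarrow> nat"
    and \<theta> :: "real \<Rightarrow> real" and \<beta> \<mu> :: real and boson :: bool
  assumes "prob_space M"
    and "\<beta> > 0"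
    and "continuous_on {0..} \<theta>"
    and "\<forall>x\<ge>0. \<theta> x \<ge> 0"
    and "\<forall>x>0. \<theta> x > 0"
    and "integrable lborel (hint boson \<beta> \<theta> \<mu> :: real^'d \<Rightarrow> real)"
    and "boson \<Longrightarrow> \<mu> > 0"
    and "prob_space.indep_vars M (\<lambda>_. count_space UNIV) (\<lambda>(L, n). K L n) ({1..} \<times> UNIV)"
    and "boson \<Longrightarrow> \<forall>L\<ge>1. \<forall>n k. measure M {\<omega>\<in>space M. K L n \<omega> = k}
                       = (1 - qL \<beta> \<theta> \<mu> L n) * (qL \<beta> \<theta> \<mu> L n) ^ k"
    and "\<not> boson \<Longrightarrow> \<forall>L\<ge>1. \<forall>n.
            measure M {\<omega>\<in>space M. K L n \<omega> = 1} = qL \<beta> \<theta> \<mu> L n / (1 + qL \<beta> \<theta> \<mu> L n) \<and>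
            measure M {\<omega>\<in>space M. K L n \<omega> = 0} = 1 / (1 + qL \<beta> \<theta> \<mu> L n)"
  shows "\<exists>c::real. AE \<omega> in M.
           limsup (\<lambda>L::nat. Max ((\<lambda>u. Rdist L u (\<lambda>n. K L n \<omega>)
                     / ereal (ln (real L) powr (1 / real CARD('d)))) ` box (\<lambda>_. 1) L))
           \<le> ereal c"
proof -
  interpret P: prob_space M by fact
  define d where "d = CARD('d)"
  have d1: "d \<ge> 1" unfolding d_def by (simp add: Suc_leI)
  define I where "I = ({1..} \<times> UNIV :: (nat \<times> ('d \<Rightarrow> int)) set)"
  define X where "X = (\<lambda>(L, n). K L n)"
  have ind: "prob_space.indep_vars M (\<lambda>_. count_space UNIV) X I" using assms(8) unfolding X_def I_def .
  define T where "T = 2 * sqrt (real d)"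
  have T0: "0 \<le> T" unfolding T_def by simp
  obtain x0 where x0: "x0 \<in> {0..T}" "\<forall>y\<in>{0..T}. \<theta> y \<le> \<theta> x0"
    using continuous_attains_sup[of "{0..T}" \<theta>] continuous_on_subset[OF assms(3), of "{0..T}"] T0 by auto
  define \<Theta> where "\<Theta> = \<theta> x0"
  define qlo where "qlo = exp (- \<beta> * (\<Theta> + \<mu>))"
  define qhi where "qhi = exp (- \<beta> * \<mu>)"
  have qlo0: "qlo > 0" unfolding qlo_def by simp
  have qrange: "qlo \<le> qL \<beta> \<theta> \<mu> L n \<and> qL \<beta> \<theta> \<mu> L n \<le> qhi" if "lnorm n / real L \<le> T" for L n
  proof -
    define x where "x = lnorm n / real L"
    have x: "0 \<le> x" "x \<le> T" unfolding x_def using that lnorm_nonneg[of n] by auto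
    have th: "0 \<le> \<theta> x" "\<theta> x \<le> \<Theta>" using x assms(4) x0 unfolding \<Theta>_def by auto
    have "\<beta> * \<theta> x \<le> \<beta> * \<Theta>" using th assms(2) by (intro mult_left_mono) auto
    moreover have "0 \<le> \<beta> * \<theta> x" using th assms(2) by simp
    ultimately show ?thesis unfolding qL_def x_def[symmetric] qlo_def qhi_def
      by (simp add: algebra_simps)
  qed
  define \<delta> where "\<delta> = min (1/2) (if boson then min (1 - qhi) qlo else min (1/(1+qhi)) (qlo/(1+qlo)))"
  have \<delta>0: "\<delta> > 0"
  proof (cases boson)
    case True
    then have "\<mu> > 0" using assms(7) by auto
    then have "qhi < 1" unfolding qhi_def using assms(2) by simp
    then show ?thesis unfolding \<delta>_def using True qlo0 by simp
  next
    case False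
    have "qhi > 0" unfolding qhi_def by simp
    then show ?thesis unfolding \<delta>_def using False qlo0 by simp
  qed
  have \<delta>h: "\<delta> \<le> 1/2" unfolding \<delta>_def by simp
  have \<delta>ok: "\<delta> \<le> measure M {\<omega>\<in>space M. K L n \<omega> = 0} \<and> measure M {\<omega>\<in>space M. K L n \<omega> = 0} \<le> 1 - \<delta>"
    if L: "L \<ge> 1" and n: "lnorm n / real L \<le> T" for L n
  proof -
    define q where "q = qL \<beta> \<theta> \<mu> L n"
    have q: "qlo \<le> q" "q \<le> qhi" using qrange[OF n] unfolding q_def by auto
    show ?thesis
    proof (cases boson)
      case True
      have "measure M {\<omega>\<in>space M. K L n \<omega> = 0} = 1 - q"
        using assms(9)[OF True] L unfolding q_def by auto
      moreover have "\<delta> \<le> 1 - qhi" "\<delta> \<le> qlo" unfolding \<delta>_def using True by auto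
      ultimately show ?thesis using q by simp
    next
      case False
      have pz: "measure M {\<omega>\<in>space M. K L n \<omega> = 0} = 1 / (1 + q)"
        using assms(10)[OF False] L unfolding q_def by auto
      have q0: "0 < q" using q qlo0 by simp
      have "\<delta> \<le> 1/(1+qhi)" unfolding \<delta>_def using False by auto
      also have "\<dots> \<le> 1/(1+q)" using q q0 by (intro divide_left_mono) auto
      finally have 1: "\<delta> \<le> 1/(1+q)" .
      have "1/(1+q) \<le> 1/(1+qlo)" using q qlo0 by (intro divide_left_mono) auto
      also have "\<dots> = 1 - qlo/(1+qlo)" using qlo0 by (simp add: field_simps)
      also have "\<dots> \<le> 1 - \<delta>" unfolding \<delta>_def using False by auto
      finally show ?thesis using 1 pz by simp
    qed
  qed
  define \<rho> where "\<rho> = 1 - \<delta>"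
  have \<rho>: "0 < \<rho>" "\<rho> < 1" unfolding \<rho>_def using \<delta>0 \<delta>h by auto
  define \<kappa> where "\<kappa> = - ln \<rho>"
  have \<kappa>0: "\<kappa> > 0" unfolding \<kappa>_def using \<rho> by simp
  have \<rho>exp: "\<rho> ^ m = exp (- \<kappa> * real m)" for m
  proof -
    have "\<rho> = exp (- \<kappa>)" unfolding \<kappa>_def using \<rho> by simp
    then show ?thesis by (simp add: exp_of_nat_mult[symmetric] mult.commute)
  qed
  define C where "C = max 1 (4 * (real d + 1) / \<kappa>)"
  have C1: "C \<ge> 1" unfolding C_def by simp
  have C\<kappa>: "\<kappa> * C \<ge> 4 * (real d + 1)"
  proof -
    have "C \<ge> 4 * (real d + 1) / \<kappa>" unfolding C_def by simp
    then show ?thesis using \<kappa>0 by (simp add: field_simps)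
  qed
  define r where "r L = ln (real L) powr (1 / real CARD('d))" for L :: nat
  define s where "s L = nat \<lceil>C * r L\<rceil>" for L
  define D where "D L u v = {\<omega>\<in>space M. \<forall>j\<in>Jset u v (s L). (K L (\<lambda>i. u i + j i) \<omega> = 0) = (K L (\<lambda>i. v i + j i) \<omega> = 0)}"
    for L and u v :: "'d \<Rightarrow> int"
  define F where "F L = (\<Union>u\<in>box (\<lambda>_. 1) L. \<Union>v\<in>box (\<lambda>_. 1) L - {u}. D L u v)" for L
  obtain N where N: "\<forall>x\<ge>N. C * ln x + 1 \<le> x" using ev_lin[of C] unfolding eventually_at_top_linorder by auto
  define L0 where "L0 = max 3 (nat \<lceil>N\<rceil>)"
  have L0: "3 \<le> L" "C * ln (real L) + 1 \<le> real L" if "L \<ge> L0" for L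
  proof -
    show "3 \<le> L" using that unfolding L0_def by simp
    have "real L \<ge> N" using that unfolding L0_def by linarith
    then show "C * ln (real L) + 1 \<le> real L" using N by simp
  qed
  have facts: "1 \<le> ln (real L) \<and> 1 \<le> r L \<and> r L \<le> ln (real L) \<and> r L ^ d = ln (real L)
     \<and> C * r L \<le> real (s L) \<and> real (s L) \<le> C * r L + 1 \<and> 1 \<le> s L \<and> s L \<le> L" if L: "L \<ge> L0" for L
  proof -
    have L3: "3 \<le> L" using L0[OF L] by simp
    have "exp 1 \<le> (3::real)" using exp_le by simp
    also have "\<dots> \<le> real L" using L3 by simp
    finally have ln1: "1 \<le> ln (real L)" using L3 by (subst ln_ge_iff) auto
    have r1: "1 \<le> r L" unfolding r_def using ln1 by (intro ge_one_powr_ge_zero) auto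
    have "r L \<le> ln (real L) powr 1" unfolding r_def using ln1 d1 unfolding d_def
      by (intro powr_mono) (auto simp: field_simps)
    then have rle: "r L \<le> ln (real L)" using ln1 by simp
    have rd: "r L ^ d = ln (real L)" unfolding r_def d_def using ln1
      by (subst powr_power) (auto simp: d1[unfolded d_def])
    have sge: "C * r L \<le> real (s L)" unfolding s_def by linarith
    have cr1: "1 * 1 \<le> C * r L" using C1 r1 by (intro mult_mono) auto
    have sle: "real (s L) \<le> C * r L + 1" unfolding s_def using cr1 of_int_ceiling_le_add_one[of "C * r L"] by simp
    have "1 \<le> real (s L)" using sge cr1 by simp
    then have s1: "1 \<le> s L" by simp
    have "real (s L) \<le> C * ln (real L) + 1" using sle rle C1 by (smt (verit) mult_left_mono)
    then have "s L \<le> L" using L0(2)[OF L] by linarith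
    then show ?thesis using ln1 r1 rle rd sge sle s1 by simp
  qed
  have site: "lnorm (\<lambda>i. w i + j i) / real L \<le> T"
    if L: "L \<ge> L0" and w: "w \<in> box (\<lambda>_. 1) L" and j: "\<forall>i. 0 \<le> j i \<and> j i \<le> int (s L) - 1" for L and w j :: "'d \<Rightarrow> int"
  proof -
    have sL: "s L \<le> L" "1 \<le> L" using facts[OF L] L0(1)[OF L] by auto
    have "\<forall>i. \<bar>real_of_int (w i + j i)\<bar> \<le> 2 * real L"
    proof
      fix i
      have "1 \<le> w i" "w i \<le> int L" using w unfolding box_def by auto
      moreover have "0 \<le> j i" "j i \<le> int (s L) - 1" using j by auto
      ultimately have "0 \<le> w i + j i" "w i + j i \<le> 2 * int L" using sL by linarith+
      then show "\<bar>real_of_int (w i + j i)\<bar> \<le> 2 * real L" by linarith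
    qed
    from lnorm_bound[OF this] have "lnorm (\<lambda>i. w i + j i) \<le> sqrt (real d) * (2 * real L)"
      unfolding d_def .
    then show ?thesis unfolding T_def using sL by (simp add: field_simps)
  qed
  have Dmeas: "D L u v \<in> sets M" if L: "L \<ge> 1" and uv: "u \<noteq> v" for L and u v :: "'d \<Rightarrow> int"
  proof -
    have "{\<omega>\<in>space M. (\<forall>g\<in>{}. X g \<omega> \<in> S g) \<and> (\<forall>j\<in>Jset u v (s L).
        (X ((\<lambda>j. (L, \<lambda>i. u i + j i)) j) \<omega> = 0) = (X ((\<lambda>j. (L, \<lambda>i. v i + j i)) j) \<omega> = 0))} \<in> sets M"
      by (rule pred_ev[OF assms(1) ind]) (use L Jset_props(1)[OF uv] in \<open>auto simp: I_def\<close>)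
    then show ?thesis unfolding D_def X_def by simp
  qed
  have Dbound: "measure M (D L u v) \<le> inverse (real L ^ (2 * d + 2))"
    if L: "L \<ge> L0" and u: "u \<in> box (\<lambda>_. 1) L" and v: "v \<in> box (\<lambda>_. 1) L" and uv: "u \<noteq> v" for L and u v :: "'d \<Rightarrow> int"
  proof -
    define J where "J = Jset u v (s L)"
    have L1: "L \<ge> 1" using L0(1)[OF L] by simp
    note fa = facts[OF L]
    have "measure M {\<omega>\<in>space M. \<forall>j\<in>J. (X ((\<lambda>j. (L, \<lambda>i. u i + j i)) j) \<omega> = 0) = (X ((\<lambda>j. (L, \<lambda>i. v i + j i)) j) \<omega> = 0)}
       \<le> (1 - \<delta>) ^ card J"
    proof (rule pair_bound[OF assms(1) ind])
      show "finite J" unfolding J_def using Jset_props(1)[OF uv] .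
      show "(\<lambda>j. (L, \<lambda>i. u i + j i)) ` J \<subseteq> I" "(\<lambda>j. (L, \<lambda>i. v i + j i)) ` J \<subseteq> I"
        using L1 unfolding I_def by auto
      show "inj_on (\<lambda>j. (L, \<lambda>i. u i + j i)) J" "inj_on (\<lambda>j. (L, \<lambda>i. v i + j i)) J"
        unfolding inj_on_def by (auto simp: fun_eq_iff)
      show "(\<lambda>j. (L, \<lambda>i. u i + j i)) ` J \<inter> (\<lambda>j. (L, \<lambda>i. v i + j i)) ` J = {}"
        using Jset_props(3)[OF uv] unfolding J_def by blast
      show "\<forall>j\<in>J. \<delta> \<le> measure M {\<omega>\<in>space M. X (L, \<lambda>i. u i + j i) \<omega> = 0} \<and>
              measure M {\<omega>\<in>space M. X (L, \<lambda>i. u i + j i) \<omega> = 0} \<le> 1 - \<delta> \<and>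
              \<delta> \<le> measure M {\<omega>\<in>space M. X (L, \<lambda>i. v i + j i) \<omega> = 0} \<and>
              measure M {\<omega>\<in>space M. X (L, \<lambda>i. v i + j i) \<omega> = 0} \<le> 1 - \<delta>"
      proof
        fix j assume j: "j \<in> J"
        have jb: "\<forall>i. 0 \<le> j i \<and> j i \<le> int (s L) - 1" using Jset_props(2)[OF uv] j unfolding J_def by blast
        show "\<delta> \<le> measure M {\<omega>\<in>space M. X (L, \<lambda>i. u i + j i) \<omega> = 0} \<and>
              measure M {\<omega>\<in>space M. X (L, \<lambda>i. u i + j i) \<omega> = 0} \<le> 1 - \<delta> \<and>
              \<delta> \<le> measure M {\<omega>\<in>space M. X (L, \<lambda>i. v i + j i) \<omega> = 0} \<and>
              measure M {\<omega>\<in>space M. X (L, \<lambda>i. v i + j i) \<omega> = 0} \<le> 1 - \<delta>"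
          using \<delta>ok[OF L1 site[OF L u jb]] \<delta>ok[OF L1 site[OF L v jb]] unfolding X_def by simp
      qed
    qed
    then have m1: "measure M (D L u v) \<le> exp (- \<kappa> * real (card J))"
      unfolding D_def J_def[symmetric] X_def \<rho>exp[symmetric] \<rho>_def by simp
    have cJ: "real (s L) ^ d \<le> 2 * real (card J)" using Jset_props(4)[OF uv] unfolding J_def d_def .
    have "C * ln (real L) \<le> C ^ d * ln (real L)"
    proof (rule mult_right_mono)
      show "C \<le> C ^ d" using C1 d1 by (metis power_one_right power_increasing)
    qed (use fa in simp)
    also have "\<dots> = (C * r L) ^ d" using fa by (simp add: power_mult_distrib)
    also have "\<dots> \<le> real (s L) ^ d" using fa C1 by (intro power_mono) auto
    finally have sd: "C * ln (real L) \<le> real (s L) ^ d" .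
    have "real (2 * d + 2) * ln (real L) \<le> \<kappa> * C * ln (real L) / 2"
    proof -
      have a: "4*(real d+1) * ln (real L) \<le> (\<kappa>*C) * ln (real L)"
        using C\<kappa> fa by (intro mult_right_mono) (auto simp: mult.commute)
      have "real (2 * d + 2) * ln (real L) = (4*(real d+1) * ln (real L)) / 2" by (simp add: algebra_simps)
      also have "\<dots> \<le> ((\<kappa>*C) * ln (real L)) / 2" using a by simp
      finally show ?thesis by simp
    qed
    also have "\<dots> \<le> \<kappa> * real (card J)"
    proof -
      have "C * ln (real L) / 2 \<le> real (card J)" using sd cJ by simp
      then have "\<kappa> * (C * ln (real L) / 2) \<le> \<kappa> * real (card J)" using \<kappa>0 by (intro mult_left_mono) auto
      then show ?thesis by simp
    qed
    finally have ex: "- \<kappa> * real (card J) \<le> - (real (2 * d + 2) * ln (real L))" by simp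
    have "exp (- \<kappa> * real (card J)) \<le> exp (- (real (2 * d + 2) * ln (real L)))"
      using ex by simp
    also have "\<dots> = inverse (real L ^ (2 * d + 2))"
    proof -
      have "exp (real (2 * d + 2) * ln (real L)) = exp (ln (real L)) ^ (2 * d + 2)"
        by (rule exp_of_nat_mult)
      also have "\<dots> = real L ^ (2 * d + 2)" using L1 by simp
      finally show ?thesis by (simp add: exp_minus del: of_nat_add of_nat_mult)
    qed
    finally show ?thesis using m1 by simp
  qed
  have Fmeas: "F L \<in> sets M" if L: "L \<ge> 1" for L
    unfolding F_def using L by (auto intro!: sets.finite_UN Dmeas finite_box)
  have Fbound: "measure M (F L) \<le> inverse (real L ^ 2)" if L: "L \<ge> L0" for L
  proof -
    have L1: "L \<ge> 1" using L0(1)[OF L] by simp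
    define B :: "('d \<Rightarrow> int) set" where "B = box (\<lambda>_. 1) L"
    define b where "b = inverse (real L ^ (2 * d + 2))"
    have b0: "0 \<le> b" unfolding b_def by simp
    have fB: "finite B" unfolding B_def by (rule finite_box)
    have inner: "measure M (\<Union>v\<in>B - {u}. D L u v) \<le> real (card B) * b" if u: "u \<in> B" for u
    proof -
      have "measure M (\<Union>v\<in>B - {u}. D L u v) \<le> (\<Sum>v\<in>B - {u}. measure M (D L u v))"
        using fB L1 by (intro measure_UNION_le Dmeas) auto
      also have "\<dots> \<le> (\<Sum>v\<in>B - {u}. b)" unfolding b_def
        using u by (intro sum_mono Dbound[OF L]) (auto simp: B_def)
      also have "\<dots> = real (card (B - {u})) * b" by simp
      also have "\<dots> \<le> real (card B) * b" using fB b0 by (intro mult_right_mono) (auto intro: card_mono)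
      finally show ?thesis .
    qed
    have "measure M (F L) \<le> (\<Sum>u\<in>B. measure M (\<Union>v\<in>B - {u}. D L u v))"
      unfolding F_def B_def[symmetric] using fB L1
      by (intro measure_UNION_le) (auto intro!: sets.finite_UN Dmeas)
    also have "\<dots> \<le> (\<Sum>u\<in>B. real (card B) * b)" by (intro sum_mono inner)
    also have "\<dots> = real L ^ d * real L ^ d * b" by (simp add: B_def card_box d_def)
    also have "\<dots> = inverse (real L ^ 2)"
    proof -
      have e: "real L ^ (2 * d + 2) = real L ^ d * real L ^ d * real L ^ 2"
        by (simp only: power_add[symmetric]) (simp add: mult_2)
      have "real L ^ d > 0" using L1 by simp
      then show ?thesis unfolding b_def e by (simp add: field_simps)
    qed
    finally show ?thesis .
  qed
  define A where "A L = (if L0 \<le> L then F L else {})" for L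
  have Ameas: "A L \<in> sets M" for L unfolding A_def using Fmeas L0(1) by (metis le_trans one_le_numeral sets.empty_sets)
  have Asum: "summable (\<lambda>L. measure M (A L))"
  proof (rule summable_comparison_test')
    show "summable (\<lambda>L::nat. inverse (real L ^ 2))" by (rule inverse_power_summable) simp
    show "norm (measure M (A L)) \<le> inverse (real L ^ 2)" if "L \<ge> L0" for L
      using Fbound[OF that] that unfolding A_def by simp
  qed
  have BC: "AE \<omega> in M. eventually (\<lambda>L. \<omega> \<in> space M - A L) sequentially"
    by (rule borel_cantelli_AE1[OF Ameas _ Asum]) (simp add: P.emeasure_finite top.not_eq_extremum[symmetric])
  have pw: "Max ((\<lambda>u. Rdist L u (\<lambda>n. K L n \<omega>) / ereal (ln (real L) powr (1 / real CARD('d)))) ` box (\<lambda>_. 1) L)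
        \<le> ereal (C + 1)"
    if L: "L \<ge> L0" and om: "\<omega> \<in> space M - A L" for L \<omega>
  proof -
    have L1: "L \<ge> 1" using L0(1)[OF L] by simp
    note fa = facts[OF L]
    have nF: "\<omega> \<notin> F L" "\<omega> \<in> space M" using om L unfolding A_def by auto
    have each: "Rdist L u (\<lambda>n. K L n \<omega>) / ereal (ln (real L) powr (1 / real CARD('d))) \<le> ereal (C + 1)"
      if u: "u \<in> box (\<lambda>_. 1) L" for u
    proof -
      have "\<forall>v\<in>box (\<lambda>_. 1) L. v \<noteq> u \<longrightarrow> \<not> same_pattern (\<lambda>n. K L n \<omega>) u v (s L)"
      proof (intro ballI impI notI)
        fix v assume v: "v \<in> box (\<lambda>_. 1) L" and vu: "v \<noteq> u" and sp: "same_pattern (\<lambda>n. K L n \<omega>) u v (s L)"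
        have "\<omega> \<in> D L u v"
          unfolding D_def using nF(2) sp Jset_props(2)[OF vu[symmetric]] unfolding same_pattern_def by auto
        then have "\<omega> \<in> F L" unfolding F_def using u v vu by auto
        then show False using nF by simp
      qed
      then obtain m where m: "Rdist L u (\<lambda>n. K L n \<omega>) = ereal (real m)" "m \<le> s L"
        using Rdist_le[of "s L"] fa by blast
      have r1: "1 \<le> r L" using fa by simp
      have "real m / r L \<le> real (s L) / r L" using m r1 by (intro divide_right_mono) auto
      also have "\<dots> \<le> (C * r L + 1) / r L" using fa r1 by (intro divide_right_mono) auto
      also have "\<dots> = C + 1 / r L" using r1 by (simp add: field_simps)
      also have "\<dots> \<le> C + 1" using r1 by simp
      finally have "real m / r L \<le> C + 1" .
      then show ?thesis unfolding m(1) r_def[symmetric] using r1 by simp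
    qed
    show ?thesis
      using each finite_box box_ne[OF L1] by (subst Max_le_iff) auto
  qed
  show ?thesis
  proof (intro exI[of _ "C + 1"])
    show "AE \<omega> in M. limsup (\<lambda>L::nat. Max ((\<lambda>u. Rdist L u (\<lambda>n. K L n \<omega>)
                     / ereal (ln (real L) powr (1 / real CARD('d)))) ` box (\<lambda>_. 1) L)) \<le> ereal (C + 1)"
      using BC
    proof (rule eventually_mono)
      fix \<omega> assume ev: "eventually (\<lambda>L. \<omega> \<in> space M - A L) sequentially"
      show "limsup (\<lambda>L::nat. Max ((\<lambda>u. Rdist L u (\<lambda>n. K L n \<omega>)
                     / ereal (ln (real L) powr (1 / real CARD('d)))) ` box (\<lambda>_. 1) L)) \<le> ereal (C + 1)"
      proof (rule Limsup_bounded)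
        show "eventually (\<lambda>L. Max ((\<lambda>u. Rdist L u (\<lambda>n. K L n \<omega>)
                     / ereal (ln (real L) powr (1 / real CARD('d)))) ` box (\<lambda>_. 1) L) \<le> ereal (C + 1)) sequentially"
          using ev eventually_ge_at_top[of L0]
          by eventually_elim (rule pw)
      qed
    qed
  qed
qed

end
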